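(* Let $\alpha>0$. Consider the model $Y_i=f(x_i)+V_i^{1/2}\xi_i$, $i=1,\dots,n$, $x_i=i/n$, with $\xi_1,\dots,\xi_n\overset{iid}{\sim}N(0,1)$, $f\in\mathcal{H}_\alpha(M)$ and $V=(V_1,\dots,V_n)\in[0,M]^n$. Let $\tilde R_i=Y_{i+2}-Y_i$ ($1\le i\le n-2$) and $$\hat T_2=\frac1n\sum_{i=1}^{n-3}\left(\tfrac13(\tilde R_{i+1}^4+\tilde R_i^4)-2\tilde R_{i+1}^2\tilde R_i^2\right).$$ With $\tilde W_i=V_{i+2}+V_i$, $\tilde\delta_i=f(x_{i+2})-f(x_i)$ and $\tilde T_2=\frac1n\sum_{i=1}^{n-3}(\tilde W_{i+1}+\tilde\delta_{i+1}^2-\tilde W_i-\tilde\delta_i^2)^2$, we have $E_{f,V}\big(|\hat T_2-\tilde T_2|^2\big)\lesssim n^{-1}+n^{-8\alpha}$, with an implicit constant not depending on $n,f,V$.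
   Context: $\mathcal{H}_\alpha(M)$: functions $g:[0,1]\to\mathbb{R}$ with $|g^{(\lfloor\alpha\rfloor)}(x)-g^{(\lfloor\alpha\rfloor)}(y)|\le M|x-y|^{\alpha-\lfloor\alpha\rfloor}$ for all $x,y$ and $\|g^{(k)}\|_\infty\le M$ for $k=0,\dots,\lfloor\alpha\rfloor$; $M$ is a fixed sufficiently large constant. $E_{f,V}$ is expectation under the model. *)

theory Defs
  imports "HOL-Probability.Probability"
begin

definition holder_class :: "real \<Rightarrow> real \<Rightarrow> (real \<Rightarrow> real) set" where
  "holder_class \<alpha> M = {g. \<exists>D :: nat \<Rightarrow> real \<Rightarrow> real.
      (\<forall>x\<in>{0..1}. D 0 x = g x) \<and>
      (\<forall>j < nat \<lfloor>\<alpha>\<rfloor>. \<forall>x\<in>{0..1}.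
          (D j has_real_derivative D (Suc j) x) (at x within {0..1})) \<and>
      (\<forall>j \<le> nat \<lfloor>\<alpha>\<rfloor>. \<forall>x\<in>{0..1}. \<bar>D j x\<bar> \<le> M) \<and>
      (\<forall>x\<in>{0..1}. \<forall>y\<in>{0..1}.
          \<bar>D (nat \<lfloor>\<alpha>\<rfloor>) x - D (nat \<lfloor>\<alpha>\<rfloor>) y\<bar> \<le> M * \<bar>x - y\<bar> powr (\<alpha> - of_int \<lfloor>\<alpha>\<rfloor>))}"

definition noise_measure :: "nat \<Rightarrow> (nat \<Rightarrow> real) measure" where
  "noise_measure n = PiM {1..n} (\<lambda>_. density lborel std_normal_density)"

definition obsY :: "nat \<Rightarrow> (real \<Rightarrow> real) \<Rightarrow> (nat \<Rightarrow> real) \<Rightarrow> (nat \<Rightarrow> real) \<Rightarrow> nat \<Rightarrow> real" where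
  "obsY n f V \<xi> i = f (real i / real n) + sqrt (V i) * \<xi> i"

definition Rt :: "nat \<Rightarrow> (real \<Rightarrow> real) \<Rightarrow> (nat \<Rightarrow> real) \<Rightarrow> (nat \<Rightarrow> real) \<Rightarrow> nat \<Rightarrow> real" where
  "Rt n f V \<xi> i = obsY n f V \<xi> (i + 2) - obsY n f V \<xi> i"

definition T2_hat :: "nat \<Rightarrow> (real \<Rightarrow> real) \<Rightarrow> (nat \<Rightarrow> real) \<Rightarrow> (nat \<Rightarrow> real) \<Rightarrow> real" where
  "T2_hat n f V \<xi> = (1 / real n) * (\<Sum>i = 1..n - 3.
      (1/3) * (Rt n f V \<xi> (i+1) ^ 4 + Rt n f V \<xi> i ^ 4)
      - 2 * Rt n f V \<xi> (i+1) ^ 2 * Rt n f V \<xi> i ^ 2)"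

definition Wt :: "(nat \<Rightarrow> real) \<Rightarrow> nat \<Rightarrow> real" where
  "Wt V i = V (i + 2) + V i"

definition deltat :: "nat \<Rightarrow> (real \<Rightarrow> real) \<Rightarrow> nat \<Rightarrow> real" where
  "deltat n f i = f (real (i + 2) / real n) - f (real i / real n)"

definition T2_tilde :: "nat \<Rightarrow> (real \<Rightarrow> real) \<Rightarrow> (nat \<Rightarrow> real) \<Rightarrow> real" where
  "T2_tilde n f V = (1 / real n) * (\<Sum>i = 1..n - 3.
      (Wt V (i+1) + (deltat n f (i+1))^2 - Wt V i - (deltat n f i)^2) ^ 2)"

end

theory Submission
  imports Defs
begin

definition NN :: "real measure" where
  "NN = density lborel (\<lambda>x. ennreal (std_normal_density x))"

lemma noise_NN: "noise_measure n = PiM {1..n} (\<lambda>_. NN)"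
  unfolding noise_measure_def NN_def ..

lemma prob_NN: "prob_space NN"
  unfolding NN_def by (rule prob_space_normal_density) simp

lemma sets_NN[measurable_cong, simp]: "sets NN = sets borel"
  unfolding NN_def by simp

lemma prob_P: "prob_space (noise_measure n)"
  unfolding noise_NN by (intro prob_space_PiM prob_NN)

lemma pps: "product_prob_space (\<lambda>_. NN)"
  by (intro product_prob_spaceI prob_NN)

lemma coord_meas: "k \<in> I \<Longrightarrow> (\<lambda>\<xi>. \<xi> k) \<in> borel_measurable (PiM I (\<lambda>_. NN))"
  using measurable_component_singleton[of k I "\<lambda>_. NN"]
  by (simp add: measurable_cong_sets[OF refl sets_NN[symmetric]])

lemma distr_coord: "k \<in> {1..n} \<Longrightarrow> distr (noise_measure n) NN (\<lambda>\<xi>. \<xi> k) = NN"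
  unfolding noise_NN by (rule product_prob_space.PiM_component[OF pps])

definition nmom :: "nat \<Rightarrow> real" where
  "nmom j = integral\<^sup>L lborel (\<lambda>x. std_normal_density x * x ^ j)"

lemma coord_integrable_gen:
  assumes "k \<in> {1..n}" "g \<in> borel_measurable borel" "integrable lborel (\<lambda>x. std_normal_density x * g x)"
  shows "integrable (noise_measure n) (\<lambda>\<xi>. g (\<xi> k))"
proof -
  have m: "(\<lambda>\<xi>. \<xi> k) \<in> measurable (noise_measure n) NN"
    using assms(1) unfolding noise_NN by (rule measurable_component_singleton)
  have gm: "g \<in> borel_measurable NN" using assms(2) by (simp add: measurable_cong_sets[OF sets_NN refl])
  have "integrable NN g"
    unfolding NN_def using assms(2,3) by (subst integrable_density) (auto simp: normal_density_nonneg)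
  then have "integrable (distr (noise_measure n) NN (\<lambda>\<xi>. \<xi> k)) g" using distr_coord[OF assms(1)] by simp
  then show ?thesis using integrable_distr_eq[OF m gm] by simp
qed

lemma coord_integral_gen:
  assumes "k \<in> {1..n}" "g \<in> borel_measurable borel"
  shows "integral\<^sup>L (noise_measure n) (\<lambda>\<xi>. g (\<xi> k)) = integral\<^sup>L lborel (\<lambda>x. std_normal_density x * g x)"
proof -
  have m: "(\<lambda>\<xi>. \<xi> k) \<in> measurable (noise_measure n) NN"
    using assms(1) unfolding noise_NN by (rule measurable_component_singleton)
  have gm: "g \<in> borel_measurable NN" using assms(2) by (simp add: measurable_cong_sets[OF sets_NN refl])
  have "integral\<^sup>L (noise_measure n) (\<lambda>\<xi>. g (\<xi> k)) = integral\<^sup>L (distr (noise_measure n) NN (\<lambda>\<xi>. \<xi> k)) g"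
    using integral_distr[OF m gm] by simp
  also have "\<dots> = integral\<^sup>L NN g" using distr_coord[OF assms(1)] by simp
  also have "\<dots> = integral\<^sup>L lborel (\<lambda>x. std_normal_density x * g x)"
    unfolding NN_def using assms(2) by (subst integral_density) (auto simp: normal_density_nonneg)
  finally show ?thesis .
qed

lemma coord_moment: "k \<in> {1..n} \<Longrightarrow> integral\<^sup>L (noise_measure n) (\<lambda>\<xi>. \<xi> k ^ j) = nmom j"
  unfolding nmom_def by (rule coord_integral_gen) auto

lemma coord_abs_integrable: "k \<in> {1..n} \<Longrightarrow> integrable (noise_measure n) (\<lambda>\<xi>. \<bar>\<xi> k\<bar> ^ j)"
  by (rule coord_integrable_gen[where g="\<lambda>x. \<bar>x\<bar>^j"]) (auto intro: integrable_std_normal_moment_abs)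

lemma nmom_vals: "nmom 0 = 1" "nmom 1 = 0" "nmom 2 = 1" "nmom 3 = 0" "nmom 4 = 3"
proof -
  show "nmom 0 = 1" using integral_std_normal_moment_even[of 0] by (simp add: nmom_def)
  show "nmom 1 = 0" using integral_std_normal_moment_odd[of 0] by (simp add: nmom_def)
  show "nmom 2 = 1" using integral_std_normal_moment_even[of 1] by (simp add: nmom_def)
  show "nmom 3 = 0" using integral_std_normal_moment_odd[of 1] by (simp add: nmom_def)
  show "nmom 4 = 3" using integral_std_normal_moment_even[of 2] by (simp add: nmom_def fact_numeral)
qed

lemma coords_indep:
  assumes "n \<ge> 1"
  shows "prob_space.indep_vars (noise_measure n) (\<lambda>_. NN) (\<lambda>i \<xi>. \<xi> i) {1..n}"
proof -
  interpret P: prob_space "noise_measure n" by (rule prob_P)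
  have ne: "{1..n} \<noteq> {}" using assms by auto
  have rv: "\<And>i. i \<in> {1..n} \<Longrightarrow> P.random_variable NN (\<lambda>\<xi>. \<xi> i)"
    unfolding noise_NN by (rule measurable_component_singleton)
  show ?thesis
  proof (subst P.indep_vars_iff_distr_eq_PiM'[OF ne rv], assumption)
    have "(\<Pi>\<^sub>M i\<in>{1..n}. distr (noise_measure n) NN (\<lambda>\<xi>. \<xi> i)) = (\<Pi>\<^sub>M i\<in>{1..n}. NN)"
      by (intro PiM_cong refl distr_coord) auto
    also have "\<dots> = distr (noise_measure n) (\<Pi>\<^sub>M i\<in>{1..n}. NN) (\<lambda>x. x)"
      unfolding noise_NN by (simp add: distr_id)
    also have "\<dots> = distr (noise_measure n) (\<Pi>\<^sub>M i\<in>{1..n}. NN) (\<lambda>x. \<lambda>i\<in>{1..n}. x i)"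
      by (intro distr_cong refl) (auto simp: noise_NN space_PiM PiE_def extensional_def fun_eq_iff)
    finally show "distr (noise_measure n) (\<Pi>\<^sub>M i\<in>{1..n}. NN) (\<lambda>x. \<lambda>i\<in>{1..n}. x i) =
       (\<Pi>\<^sub>M i\<in>{1..n}. distr (noise_measure n) NN (\<lambda>\<xi>. \<xi> i))" by simp
  qed
qed


definition good :: "nat \<Rightarrow> ((nat \<Rightarrow> real) \<Rightarrow> real) \<Rightarrow> bool" where
  "good n h \<longleftrightarrow> h \<in> borel_measurable (noise_measure n) \<and>
     (\<forall>m. integrable (noise_measure n) (\<lambda>\<xi>. \<bar>h \<xi>\<bar> ^ m))"

lemma good_meas: "good n h \<Longrightarrow> h \<in> borel_measurable (noise_measure n)"
  unfolding good_def by blast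

lemma good_int: "good n h \<Longrightarrow> integrable (noise_measure n) h"
proof -
  assume "good n h"
  then have m: "h \<in> borel_measurable (noise_measure n)" and "integrable (noise_measure n) (\<lambda>\<xi>. \<bar>h \<xi>\<bar> ^ 1)"
    unfolding good_def by blast+
  then have "integrable (noise_measure n) (\<lambda>\<xi>. \<bar>h \<xi>\<bar>)" by simp
  then show ?thesis using integrable_abs_iff[OF m] by simp
qed

lemma good_const: "good n (\<lambda>_. c)"
proof -
  interpret prob_space "noise_measure n" by (rule prob_P)
  show ?thesis unfolding good_def by auto
qed

lemma good_coord: "k \<in> {1..n} \<Longrightarrow> good n (\<lambda>\<xi>. \<xi> k)"
  unfolding good_def using coord_abs_integrable[of k n] coord_meas[of k "{1..n}"]
  by (auto simp: noise_NN)

lemma abs_add_pow: "\<bar>a + b\<bar> ^ m \<le> 2 ^ m * (\<bar>a\<bar> ^ m + \<bar>b\<bar> ^ m)" for a b :: real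
proof -
  have "\<bar>a + b\<bar> \<le> 2 * max \<bar>a\<bar> \<bar>b\<bar>" by auto
  then have "\<bar>a + b\<bar> ^ m \<le> (2 * max \<bar>a\<bar> \<bar>b\<bar>) ^ m" by (intro power_mono) auto
  also have "\<dots> = 2 ^ m * max \<bar>a\<bar> \<bar>b\<bar> ^ m" by (simp add: power_mult_distrib)
  also have "max \<bar>a\<bar> \<bar>b\<bar> ^ m \<le> \<bar>a\<bar> ^ m + \<bar>b\<bar> ^ m" by (auto simp: max_def)
  finally show ?thesis by simp
qed

lemma good_add: assumes "good n f" "good n g" shows "good n (\<lambda>x. f x + g x)"
proof -
  have [measurable]: "f \<in> borel_measurable (noise_measure n)" "g \<in> borel_measurable (noise_measure n)"
    using assms by (auto simp: good_def)
  have fi: "integrable (noise_measure n) (\<lambda>\<xi>. \<bar>f \<xi>\<bar> ^ m)" "integrable (noise_measure n) (\<lambda>\<xi>. \<bar>g \<xi>\<bar> ^ m)" for m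
    using assms by (auto simp: good_def)
  have "integrable (noise_measure n) (\<lambda>\<xi>. \<bar>f \<xi> + g \<xi>\<bar> ^ m)" for m
  proof (rule Bochner_Integration.integrable_bound)
    show "integrable (noise_measure n) (\<lambda>\<xi>. 2 ^ m * (\<bar>f \<xi>\<bar> ^ m + \<bar>g \<xi>\<bar> ^ m))"
      using fi by (intro integrable_mult_right Bochner_Integration.integrable_add fi)
    show "(\<lambda>\<xi>. \<bar>f \<xi> + g \<xi>\<bar> ^ m) \<in> borel_measurable (noise_measure n)" by measurable
    show "AE x in noise_measure n. norm (\<bar>f x + g x\<bar> ^ m) \<le> norm (2 ^ m * (\<bar>f x\<bar> ^ m + \<bar>g x\<bar> ^ m))"
      by (intro AE_I2) (simp add: abs_add_pow)
  qed
  moreover have "(\<lambda>x. f x + g x) \<in> borel_measurable (noise_measure n)" by measurable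
  ultimately show ?thesis unfolding good_def by blast
qed

lemma xy_le_sq: "0 \<le> x \<Longrightarrow> 0 \<le> y \<Longrightarrow> x * y \<le> x^2 + y^2" for x y :: real
proof -
  assume "0 \<le> x" "0 \<le> y"
  have "0 \<le> (x - y)^2" by simp
  then have "2 * x * y \<le> x^2 + y^2" by (simp add: power2_eq_square algebra_simps)
  moreover have "0 \<le> x * y" using \<open>0 \<le> x\<close> \<open>0 \<le> y\<close> by simp
  ultimately show ?thesis by linarith
qed

lemma abs_mult_pow: "\<bar>a * b\<bar> ^ m \<le> \<bar>a\<bar> ^ (2*m) + \<bar>b\<bar> ^ (2*m)" for a b :: real
proof -
  have "\<bar>a * b\<bar> ^ m = \<bar>a\<bar>^m * \<bar>b\<bar>^m" by (simp add: abs_mult power_mult_distrib)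
  also have "\<dots> \<le> (\<bar>a\<bar>^m)^2 + (\<bar>b\<bar>^m)^2" by (rule xy_le_sq) auto
  finally show ?thesis by (simp add: power_mult mult.commute)
qed

lemma good_mult: assumes "good n f" "good n g" shows "good n (\<lambda>x. f x * g x)"
proof -
  have [measurable]: "f \<in> borel_measurable (noise_measure n)" "g \<in> borel_measurable (noise_measure n)"
    using assms by (auto simp: good_def)
  have fi: "integrable (noise_measure n) (\<lambda>\<xi>. \<bar>f \<xi>\<bar> ^ m)" "integrable (noise_measure n) (\<lambda>\<xi>. \<bar>g \<xi>\<bar> ^ m)" for m
    using assms by (auto simp: good_def)
  have "integrable (noise_measure n) (\<lambda>\<xi>. \<bar>f \<xi> * g \<xi>\<bar> ^ m)" for m
  proof (rule Bochner_Integration.integrable_bound)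
    show "integrable (noise_measure n) (\<lambda>\<xi>. \<bar>f \<xi>\<bar> ^ (2*m) + \<bar>g \<xi>\<bar> ^ (2*m))"
      by (intro Bochner_Integration.integrable_add fi)
    show "(\<lambda>\<xi>. \<bar>f \<xi> * g \<xi>\<bar> ^ m) \<in> borel_measurable (noise_measure n)" by measurable
    show "AE x in noise_measure n. norm (\<bar>f x * g x\<bar> ^ m) \<le> norm (\<bar>f x\<bar> ^ (2*m) + \<bar>g x\<bar> ^ (2*m))"
      by (intro AE_I2) (simp add: abs_mult_pow)
  qed
  moreover have "(\<lambda>x. f x * g x) \<in> borel_measurable (noise_measure n)" by measurable
  ultimately show ?thesis unfolding good_def by blast
qed

lemma good_uminus: "good n f \<Longrightarrow> good n (\<lambda>x. - f x)"
  using good_mult[OF good_const[of n "-1"], of f] by simp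

lemma good_diff: "good n f \<Longrightarrow> good n g \<Longrightarrow> good n (\<lambda>x. f x - g x)"
  using good_add[of n f "\<lambda>x. - g x"] good_uminus[of n g] by simp

lemma good_pow: "good n f \<Longrightarrow> good n (\<lambda>x. f x ^ k)"
  by (induction k) (auto intro: good_const good_mult)

lemma good_sum: "(\<And>i. i \<in> S \<Longrightarrow> good n (f i)) \<Longrightarrow> good n (\<lambda>x. \<Sum>i\<in>S. f i x)"
proof (induction S rule: infinite_finite_induct)
  case (infinite A) then show ?case by (simp add: good_const)
next
  case empty then show ?case by (simp add: good_const)
next
  case (insert x F) then show ?case by (simp add: good_add)
qed

lemmas good_intros = good_const good_coord good_add good_mult good_diff good_uminus good_pow good_sum

lemma indep_int:
  fixes F G :: "(nat \<Rightarrow> real) \<Rightarrow> real"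
  assumes "n \<ge> 1" "A \<inter> B = {}" "A \<subseteq> {1..n}" "B \<subseteq> {1..n}"
    and F: "F \<in> borel_measurable (PiM A (\<lambda>_. NN))" and G: "G \<in> borel_measurable (PiM B (\<lambda>_. NN))"
    and iF: "integrable (noise_measure n) (\<lambda>\<xi>. F (restrict \<xi> A))"
    and iG: "integrable (noise_measure n) (\<lambda>\<xi>. G (restrict \<xi> B))"
  shows "integral\<^sup>L (noise_measure n) (\<lambda>\<xi>. F (restrict \<xi> A) * G (restrict \<xi> B)) =
     integral\<^sup>L (noise_measure n) (\<lambda>\<xi>. F (restrict \<xi> A)) * integral\<^sup>L (noise_measure n) (\<lambda>\<xi>. G (restrict \<xi> B))"
proof -
  interpret P: prob_space "noise_measure n" by (rule prob_P)
  have "P.indep_var (PiM A (\<lambda>_. NN)) (\<lambda>\<omega>. restrict (\<lambda>i. \<omega> i) A) (PiM B (\<lambda>_. NN)) (\<lambda>\<omega>. restrict (\<lambda>i. \<omega> i) B)"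
    by (rule P.indep_var_restrict[OF coords_indep[OF assms(1)] assms(2-4)])
  from P.indep_var_compose[OF this F G]
  have "P.indep_var borel (\<lambda>\<xi>. F (restrict \<xi> A)) borel (\<lambda>\<xi>. G (restrict \<xi> B))"
    by (simp add: comp_def)
  from P.indep_var_lebesgue_integral[OF this iF iG] show ?thesis .
qed

lemma restrict_meas: "A \<subseteq> {1..n} \<Longrightarrow> (\<lambda>\<xi>. restrict \<xi> A) \<in> measurable (noise_measure n) (PiM A (\<lambda>_. NN))"
  unfolding noise_NN by (rule measurable_restrict_subset)

lemma good_restrict:
  fixes F :: "(nat \<Rightarrow> real) \<Rightarrow> real"
  assumes "A \<subseteq> {1..n}" "F \<in> borel_measurable (PiM A (\<lambda>_. NN))" "good n h"
    "\<And>\<xi>. \<xi> \<in> space (noise_measure n) \<Longrightarrow> F (restrict \<xi> A) = h \<xi>"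
  shows "integrable (noise_measure n) (\<lambda>\<xi>. F (restrict \<xi> A))"
    "integral\<^sup>L (noise_measure n) (\<lambda>\<xi>. F (restrict \<xi> A)) = integral\<^sup>L (noise_measure n) h"
proof -
  show "integrable (noise_measure n) (\<lambda>\<xi>. F (restrict \<xi> A))"
  proof -
    have "integrable (noise_measure n) (\<lambda>\<xi>. F (restrict \<xi> A)) = integrable (noise_measure n) h"
      by (rule Bochner_Integration.integrable_cong[OF refl]) (simp add: assms(4))
    then show ?thesis using good_int[OF assms(3)] by simp
  qed
  show "integral\<^sup>L (noise_measure n) (\<lambda>\<xi>. F (restrict \<xi> A)) = integral\<^sup>L (noise_measure n) h"
    by (rule Bochner_Integration.integral_cong[OF refl]) (simp add: assms(4))
qed


lemma E_mono:
  assumes "n \<ge> 1" "a \<in> {1..n}" "b \<in> {1..n}" "a \<noteq> b"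
  shows "integral\<^sup>L (noise_measure n) (\<lambda>\<xi>. \<xi> a ^ j * \<xi> b ^ l) = nmom j * nmom l"
proof -
  have [measurable]: "(\<lambda>\<omega>. \<omega> a) \<in> borel_measurable (PiM {a} (\<lambda>_. NN))"
    "(\<lambda>\<omega>. \<omega> b) \<in> borel_measurable (PiM {b} (\<lambda>_. NN))" by (auto intro: coord_meas)
  have Fm: "(\<lambda>\<omega>. \<omega> a ^ j) \<in> borel_measurable (PiM {a} (\<lambda>_. NN))" by measurable
  have Gm: "(\<lambda>\<omega>. \<omega> b ^ l) \<in> borel_measurable (PiM {b} (\<lambda>_. NN))" by measurable
  have ga: "good n (\<lambda>\<xi>. \<xi> a ^ j)" using assms by (intro good_pow good_coord) auto
  have gb: "good n (\<lambda>\<xi>. \<xi> b ^ l)" using assms by (intro good_pow good_coord) auto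
  have sa: "{a} \<subseteq> {1..n}" "{b} \<subseteq> {1..n}" using assms by auto
  have i1: "integrable (noise_measure n) (\<lambda>\<xi>. (\<lambda>\<omega>. \<omega> a ^ j) (restrict \<xi> {a}))"
    by (rule good_restrict(1)[OF sa(1) Fm ga]) simp
  have i2: "integrable (noise_measure n) (\<lambda>\<xi>. (\<lambda>\<omega>. \<omega> b ^ l) (restrict \<xi> {b}))"
    by (rule good_restrict(1)[OF sa(2) Gm gb]) simp
  have "integral\<^sup>L (noise_measure n) (\<lambda>\<xi>. (\<lambda>\<omega>. \<omega> a ^ j) (restrict \<xi> {a}) * (\<lambda>\<omega>. \<omega> b ^ l) (restrict \<xi> {b})) =
    integral\<^sup>L (noise_measure n) (\<lambda>\<xi>. (\<lambda>\<omega>. \<omega> a ^ j) (restrict \<xi> {a})) * integral\<^sup>L (noise_measure n) (\<lambda>\<xi>. (\<lambda>\<omega>. \<omega> b ^ l) (restrict \<xi> {b}))"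
    by (rule indep_int[OF assms(1) _ sa Fm Gm i1 i2]) (use assms in auto)
  then show ?thesis using assms by (simp add: coord_moment)
qed

lemma binom_expand:
  fixes d p r x y :: real
  shows "(d + p * x + r * y) ^ N = (\<Sum>k\<le>N. \<Sum>j\<le>k. (of_nat (N choose k) * of_nat (k choose j) * d ^ (N - k) * p ^ j * r ^ (k - j)) * (x ^ j * y ^ (k - j)))"
proof -
  have "(d + p * x + r * y) ^ N = ((p * x + r * y) + d) ^ N" by (simp add: algebra_simps)
  also have "\<dots> = (\<Sum>k\<le>N. of_nat (N choose k) * (p * x + r * y) ^ k * d ^ (N - k))"
    by (rule binomial_ring)
  also have "\<dots> = (\<Sum>k\<le>N. of_nat (N choose k) * (\<Sum>j\<le>k. of_nat (k choose j) * (p * x) ^ j * (r * y) ^ (k - j)) * d ^ (N - k))"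
    by (simp only: binomial_ring)
  also have "\<dots> = (\<Sum>k\<le>N. \<Sum>j\<le>k. of_nat (N choose k) * (of_nat (k choose j) * (p * x) ^ j * (r * y) ^ (k - j)) * d ^ (N - k))"
    by (simp only: sum_distrib_left sum_distrib_right)
  also have "\<dots> = (\<Sum>k\<le>N. \<Sum>j\<le>k. (of_nat (N choose k) * of_nat (k choose j) * d ^ (N - k) * p ^ j * r ^ (k - j)) * (x ^ j * y ^ (k - j)))"
    by (intro sum.cong refl) (simp only: power_mult_distrib mult_ac)
  finally show ?thesis .
qed

lemma E_lin_pow:
  assumes "n \<ge> 1" "a \<in> {1..n}" "b \<in> {1..n}" "a \<noteq> b"
  shows "integral\<^sup>L (noise_measure n) (\<lambda>\<xi>. (d + p * \<xi> a - q * \<xi> b) ^ N) =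
    (\<Sum>k\<le>N. \<Sum>j\<le>k. (of_nat (N choose k) * of_nat (k choose j) * d ^ (N - k) * p ^ j * (- q) ^ (k - j)) * (nmom j * nmom (k - j)))"
proof -
  define c where "c k j = of_nat (N choose k) * of_nat (k choose j) * d ^ (N - k) * p ^ j * (- q) ^ (k - j)" for k j
  have eq: "(d + p * \<xi> a - q * \<xi> b) ^ N = (\<Sum>k\<le>N. \<Sum>j\<le>k. c k j * (\<xi> a ^ j * \<xi> b ^ (k - j)))" for \<xi>
    using binom_expand[of d p "\<xi> a" "- q" "\<xi> b" N] by (simp add: c_def)
  have g: "good n (\<lambda>\<xi>. c k j * (\<xi> a ^ j * \<xi> b ^ (k - j)))" for k j
    using assms by (intro good_mult good_const good_pow good_coord) auto
  have "integral\<^sup>L (noise_measure n) (\<lambda>\<xi>. (d + p * \<xi> a - q * \<xi> b) ^ N) =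
     integral\<^sup>L (noise_measure n) (\<lambda>\<xi>. \<Sum>k\<le>N. \<Sum>j\<le>k. c k j * (\<xi> a ^ j * \<xi> b ^ (k - j)))"
    by (simp only: eq)
  also have "\<dots> = (\<Sum>k\<le>N. integral\<^sup>L (noise_measure n) (\<lambda>\<xi>. \<Sum>j\<le>k. c k j * (\<xi> a ^ j * \<xi> b ^ (k - j))))"
    by (rule Bochner_Integration.integral_sum) (intro good_int good_sum g)
  also have "\<dots> = (\<Sum>k\<le>N. \<Sum>j\<le>k. integral\<^sup>L (noise_measure n) (\<lambda>\<xi>. c k j * (\<xi> a ^ j * \<xi> b ^ (k - j))))"
    by (intro sum.cong refl Bochner_Integration.integral_sum good_int g)
  also have "\<dots> = (\<Sum>k\<le>N. \<Sum>j\<le>k. c k j * (nmom j * nmom (k - j)))"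
    by (intro sum.cong refl) (simp add: E_mono[OF assms])
  finally show ?thesis by (simp add: c_def)
qed

lemma nmom_Suc: "nmom 0 = 1" "nmom (Suc 0) = 0" "nmom (Suc (Suc 0)) = 1" "nmom (Suc (Suc (Suc 0))) = 0"
   "nmom (Suc (Suc (Suc (Suc 0)))) = 3"
  using nmom_vals by (simp_all add: eval_nat_numeral)

lemma E_lin_2:
  assumes "n \<ge> 1" "a \<in> {1..n}" "b \<in> {1..n}" "a \<noteq> b"
  shows "integral\<^sup>L (noise_measure n) (\<lambda>\<xi>. (d + p * \<xi> a - q * \<xi> b) ^ 2) = d^2 + p^2 + q^2"
  using E_lin_pow[OF assms, of d p q 2]
  by (simp add: eval_nat_numeral atMost_Suc nmom_Suc)

lemma E_lin_4:
  assumes "n \<ge> 1" "a \<in> {1..n}" "b \<in> {1..n}" "a \<noteq> b"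
  shows "integral\<^sup>L (noise_measure n) (\<lambda>\<xi>. (d + p * \<xi> a - q * \<xi> b) ^ 4) = d^4 + 6 * d^2 * (p^2 + q^2) + 3 * (p^2 + q^2)^2"
  using E_lin_pow[OF assms, of d p q 4]
  by (simp add: eval_nat_numeral atMost_Suc nmom_Suc) (simp add: algebra_simps eval_nat_numeral)


lemma Rt_form: "Rt n f V \<xi> i = deltat n f i + sqrt (V (i+2)) * \<xi> (i+2) - sqrt (V i) * \<xi> i"
  by (simp add: Rt_def obsY_def deltat_def)

lemma Rt_restrict: "i \<in> A \<Longrightarrow> i + 2 \<in> A \<Longrightarrow> Rt n f V (restrict \<xi> A) i = Rt n f V \<xi> i"
  by (simp add: Rt_form)

lemma Rt_meas: "i \<in> A \<Longrightarrow> i + 2 \<in> A \<Longrightarrow> (\<lambda>\<omega>. Rt n f V \<omega> i) \<in> borel_measurable (PiM A (\<lambda>_. NN))"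
proof -
  assume a: "i \<in> A" "i + 2 \<in> A"
  have [measurable]: "(\<lambda>\<omega>. \<omega> i) \<in> borel_measurable (PiM A (\<lambda>_. NN))"
    "(\<lambda>\<omega>. \<omega> (i+2)) \<in> borel_measurable (PiM A (\<lambda>_. NN))" using a by (auto intro: coord_meas)
  show ?thesis unfolding Rt_form by measurable
qed

lemma good_Rt: "i \<ge> 1 \<Longrightarrow> i + 2 \<le> n \<Longrightarrow> good n (\<lambda>\<xi>. Rt n f V \<xi> i)"
  unfolding Rt_form by (intro good_intros) auto

definition KK :: "nat \<Rightarrow> real \<Rightarrow> real" where
  "KK N B = (\<Sum>k\<le>N. \<Sum>j\<le>k. (of_nat (N choose k) * of_nat (k choose j) * B ^ (N - k) * B ^ j * B ^ (k - j)) * (\<bar>nmom j\<bar> * \<bar>nmom (k - j)\<bar>))"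

lemma E_lin_bound:
  assumes "n \<ge> 1" "a \<in> {1..n}" "b \<in> {1..n}" "a \<noteq> b" "\<bar>d\<bar> \<le> B" "\<bar>p\<bar> \<le> B" "\<bar>q\<bar> \<le> B"
  shows "integral\<^sup>L (noise_measure n) (\<lambda>\<xi>. (d + p * \<xi> a - q * \<xi> b) ^ N) \<le> KK N B"
proof -
  have "integral\<^sup>L (noise_measure n) (\<lambda>\<xi>. (d + p * \<xi> a - q * \<xi> b) ^ N) \<le>
     \<bar>\<Sum>k\<le>N. \<Sum>j\<le>k. (of_nat (N choose k) * of_nat (k choose j) * d ^ (N - k) * p ^ j * (- q) ^ (k - j)) * (nmom j * nmom (k - j))\<bar>"
    by (simp add: E_lin_pow[OF assms(1-4)])
  also have "\<dots> \<le> (\<Sum>k\<le>N. \<Sum>j\<le>k. \<bar>(of_nat (N choose k) * of_nat (k choose j) * d ^ (N - k) * p ^ j * (- q) ^ (k - j)) * (nmom j * nmom (k - j))\<bar>)"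
    by (rule order_trans[OF sum_abs]) (intro sum_mono sum_abs)
  also have "\<dots> \<le> KK N B"
    unfolding KK_def
  proof (intro sum_mono)
    fix k j
    have "\<bar>d ^ (N - k)\<bar> \<le> B ^ (N - k)" "\<bar>p ^ j\<bar> \<le> B ^ j" "\<bar>(- q) ^ (k - j)\<bar> \<le> B ^ (k - j)"
      using assms(5-7) by (auto simp: power_abs intro: power_mono)
    moreover have "0 \<le> B" using assms(5) by linarith
    ultimately show "\<bar>(of_nat (N choose k) * of_nat (k choose j) * d ^ (N - k) * p ^ j * (- q) ^ (k - j)) * (nmom j * nmom (k - j))\<bar>
       \<le> (of_nat (N choose k) * of_nat (k choose j) * B ^ (N - k) * B ^ j * B ^ (k - j)) * (\<bar>nmom j\<bar> * \<bar>nmom (k - j)\<bar>)"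
      unfolding abs_mult
      by (intro mult_mono mult_nonneg_nonneg zero_le_power) (auto simp del: power_minus)
  qed
  finally show ?thesis .
qed


lemma indep_blocks:
  fixes F G :: "(nat \<Rightarrow> real) \<Rightarrow> real"
  assumes "n \<ge> 1" "A \<inter> B = {}" "A \<subseteq> {1..n}" "B \<subseteq> {1..n}"
    and Fm: "F \<in> borel_measurable (PiM A (\<lambda>_. NN))" and Gm: "G \<in> borel_measurable (PiM B (\<lambda>_. NN))"
    and g1: "good n h1" and g2: "good n h2"
    and e1: "\<And>\<xi>. F (restrict \<xi> A) = h1 \<xi>" and e2: "\<And>\<xi>. G (restrict \<xi> B) = h2 \<xi>"
  shows "integral\<^sup>L (noise_measure n) (\<lambda>\<xi>. h1 \<xi> * h2 \<xi>) =
     integral\<^sup>L (noise_measure n) h1 * integral\<^sup>L (noise_measure n) h2"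
proof -
  have i1: "integrable (noise_measure n) (\<lambda>\<xi>. F (restrict \<xi> A))"
    by (rule good_restrict(1)[OF assms(3) Fm g1]) (simp add: e1)
  have i2: "integrable (noise_measure n) (\<lambda>\<xi>. G (restrict \<xi> B))"
    by (rule good_restrict(1)[OF assms(4) Gm g2]) (simp add: e2)
  from indep_int[OF assms(1-4) Fm Gm i1 i2] show ?thesis unfolding e1 e2 .
qed

lemma ER2:
  assumes "n \<ge> 1" "i \<ge> 1" "i + 2 \<le> n" "V i \<ge> 0" "V (i+2) \<ge> 0"
  shows "integral\<^sup>L (noise_measure n) (\<lambda>\<xi>. Rt n f V \<xi> i ^ 2) = (deltat n f i)^2 + Wt V i"
  unfolding Rt_form using E_lin_2[OF assms(1), of "i+2" i "deltat n f i" "sqrt (V (i+2))" "sqrt (V i)"] assms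
  by (simp add: Wt_def)

lemma ER4:
  assumes "n \<ge> 1" "i \<ge> 1" "i + 2 \<le> n" "V i \<ge> 0" "V (i+2) \<ge> 0"
  shows "integral\<^sup>L (noise_measure n) (\<lambda>\<xi>. Rt n f V \<xi> i ^ 4) =
     (deltat n f i)^4 + 6 * (deltat n f i)^2 * Wt V i + 3 * (Wt V i)^2"
  unfolding Rt_form using E_lin_4[OF assms(1), of "i+2" i "deltat n f i" "sqrt (V (i+2))" "sqrt (V i)"] assms
  by (simp add: Wt_def)

lemma Ecross:
  assumes "n \<ge> 1" "i \<ge> 1" "i + 3 \<le> n"
  shows "integral\<^sup>L (noise_measure n) (\<lambda>\<xi>. Rt n f V \<xi> (i+1) ^ 2 * Rt n f V \<xi> i ^ 2) =
    integral\<^sup>L (noise_measure n) (\<lambda>\<xi>. Rt n f V \<xi> (i+1) ^ 2) * integral\<^sup>L (noise_measure n) (\<lambda>\<xi>. Rt n f V \<xi> i ^ 2)"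
proof (rule indep_blocks[OF assms(1), where A="{i+1, i+3}" and B="{i, i+2}"
      and F="\<lambda>\<omega>. Rt n f V \<omega> (i+1) ^ 2" and G="\<lambda>\<omega>. Rt n f V \<omega> i ^ 2"])
  have [measurable]: "(\<lambda>\<omega>. Rt n f V \<omega> (i+1)) \<in> borel_measurable (PiM {i+1, i+3} (\<lambda>_. NN))"
    by (rule Rt_meas) auto
  have [measurable]: "(\<lambda>\<omega>. Rt n f V \<omega> i) \<in> borel_measurable (PiM {i, i+2} (\<lambda>_. NN))"
    by (rule Rt_meas) auto
  show "(\<lambda>\<omega>. Rt n f V \<omega> (i + 1) ^ 2) \<in> borel_measurable (PiM {i+1, i+3} (\<lambda>_. NN))" by measurable
  show "(\<lambda>\<omega>. Rt n f V \<omega> i ^ 2) \<in> borel_measurable (PiM {i, i+2} (\<lambda>_. NN))" by measurable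
  show "good n (\<lambda>\<xi>. Rt n f V \<xi> (i + 1) ^ 2)" using assms by (intro good_pow good_Rt) auto
  show "good n (\<lambda>\<xi>. Rt n f V \<xi> i ^ 2)" using assms by (intro good_pow good_Rt) auto
  show "Rt n f V (restrict \<xi> {i+1, i+3}) (i + 1) ^ 2 = Rt n f V \<xi> (i + 1) ^ 2" for \<xi>
    by (subst Rt_restrict) auto
  show "Rt n f V (restrict \<xi> {i, i+2}) i ^ 2 = Rt n f V \<xi> i ^ 2" for \<xi>
    by (subst Rt_restrict) auto
qed (use assms in auto)

definition gt :: "nat \<Rightarrow> (real \<Rightarrow> real) \<Rightarrow> (nat \<Rightarrow> real) \<Rightarrow> (nat \<Rightarrow> real) \<Rightarrow> nat \<Rightarrow> real" where
  "gt n f V \<xi> i = (1/3) * (Rt n f V \<xi> (i+1) ^ 4 + Rt n f V \<xi> i ^ 4)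
      - 2 * Rt n f V \<xi> (i+1) ^ 2 * Rt n f V \<xi> i ^ 2"

definition ht :: "nat \<Rightarrow> (real \<Rightarrow> real) \<Rightarrow> (nat \<Rightarrow> real) \<Rightarrow> nat \<Rightarrow> real" where
  "ht n f V i = (Wt V (i+1) + (deltat n f (i+1))^2 - Wt V i - (deltat n f i)^2) ^ 2"

lemma T2_hat_gt: "T2_hat n f V \<xi> = (1 / real n) * (\<Sum>i = 1..n - 3. gt n f V \<xi> i)"
  unfolding T2_hat_def gt_def ..

lemma T2_tilde_ht: "T2_tilde n f V = (1 / real n) * (\<Sum>i = 1..n - 3. ht n f V i)"
  unfolding T2_tilde_def ht_def ..

lemma good_gt: "i \<ge> 1 \<Longrightarrow> i + 3 \<le> n \<Longrightarrow> good n (\<lambda>\<xi>. gt n f V \<xi> i)"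
  unfolding gt_def by (intro good_intros good_Rt) auto

lemma Egt:
  assumes "n \<ge> 1" "i \<ge> 1" "i + 3 \<le> n" and V: "\<forall>k\<in>{1..n}. 0 \<le> V k"
  shows "integral\<^sup>L (noise_measure n) (\<lambda>\<xi>. gt n f V \<xi> i) =
    ht n f V i - (2/3) * ((deltat n f (i+1))^4 + (deltat n f i)^4)"
proof -
  have v: "V i \<ge> 0" "V (i+1) \<ge> 0" "V (i+2) \<ge> 0" "V (i+3) \<ge> 0" using V assms by auto
  have g4: "good n (\<lambda>\<xi>. Rt n f V \<xi> (i+1) ^ 4)" "good n (\<lambda>\<xi>. Rt n f V \<xi> i ^ 4)"
    "good n (\<lambda>\<xi>. 2 * Rt n f V \<xi> (i+1) ^ 2 * Rt n f V \<xi> i ^ 2)"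
    using assms by (auto intro!: good_intros good_Rt)
  have "integral\<^sup>L (noise_measure n) (\<lambda>\<xi>. gt n f V \<xi> i) =
     (1/3) * (integral\<^sup>L (noise_measure n) (\<lambda>\<xi>. Rt n f V \<xi> (i+1) ^ 4) + integral\<^sup>L (noise_measure n) (\<lambda>\<xi>. Rt n f V \<xi> i ^ 4))
     - 2 * integral\<^sup>L (noise_measure n) (\<lambda>\<xi>. Rt n f V \<xi> (i+1) ^ 2 * Rt n f V \<xi> i ^ 2)"
    unfolding gt_def using good_int[OF g4(1)] good_int[OF g4(2)] good_int[OF g4(3)]
    by (simp add: mult.assoc)
  also have "\<dots> = ht n f V i - (2/3) * ((deltat n f (i+1))^4 + (deltat n f i)^4)"
  proof -
    have a1: "integral\<^sup>L (noise_measure n) (\<lambda>\<xi>. Rt n f V \<xi> (i+1) ^ 4) =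
       (deltat n f (i+1))^4 + 6 * (deltat n f (i+1))^2 * Wt V (i+1) + 3 * (Wt V (i+1))^2"
      by (rule ER4) (use assms v in auto)
    have a2: "integral\<^sup>L (noise_measure n) (\<lambda>\<xi>. Rt n f V \<xi> i ^ 4) =
       (deltat n f i)^4 + 6 * (deltat n f i)^2 * Wt V i + 3 * (Wt V i)^2"
      by (rule ER4) (use assms v in auto)
    have a3: "integral\<^sup>L (noise_measure n) (\<lambda>\<xi>. Rt n f V \<xi> (i+1) ^ 2) = (deltat n f (i+1))^2 + Wt V (i+1)"
      by (rule ER2) (use assms v in auto)
    have a4: "integral\<^sup>L (noise_measure n) (\<lambda>\<xi>. Rt n f V \<xi> i ^ 2) = (deltat n f i)^2 + Wt V i"
      by (rule ER2) (use assms v in auto)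
    have a5: "integral\<^sup>L (noise_measure n) (\<lambda>\<xi>. Rt n f V \<xi> (i+1) ^ 2 * Rt n f V \<xi> i ^ 2) =
       ((deltat n f (i+1))^2 + Wt V (i+1)) * ((deltat n f i)^2 + Wt V i)"
      using Ecross[OF assms(1-3), of f V] a3 a4 by simp
    show ?thesis unfolding a1 a2 a5 ht_def
      by (simp add: power2_eq_square power4_eq_xxxx algebra_simps)
  qed
  finally show ?thesis .
qed


lemma g_aux: "0 \<le> (S::real) \<Longrightarrow> 0 \<le> P \<Longrightarrow> 2 * P \<le> S \<Longrightarrow> \<bar>1/3 * S - 2 * P\<bar> \<le> S"
  by (simp add: abs_le_iff)

lemma g_sq_bound:
  fixes a b :: real
  shows "((1/3) * (a ^ 4 + b ^ 4) - 2 * a ^ 2 * b ^ 2) ^ 2 \<le> 2 * (a ^ 8 + b ^ 8)"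
proof -
  define x where "x = a^2"
  define y where "y = b^2"
  have x0: "0 \<le> x" and y0: "0 \<le> y" by (simp_all add: x_def y_def)
  have e: "a^4 = x^2" "b^4 = y^2" "a^8 = x^4" "b^8 = y^4" "a^2 * b^2 = x * y"
    by (simp_all add: x_def y_def flip: power_mult)
  have h1: "2 * (x * y) \<le> x^2 + y^2"
  proof -
    have "0 \<le> (x - y)^2" by simp
    then show ?thesis by (simp add: power2_eq_square algebra_simps)
  qed
  have h2: "0 \<le> x * y" using x0 y0 by simp
  define g where "g = (1/3) * (x^2 + y^2) - 2 * (x * y)"
  have "0 \<le> x^2" "0 \<le> y^2" by simp_all
  then have "\<bar>g\<bar> \<le> x^2 + y^2" unfolding g_def using h1 h2 g_aux[of "x^2+y^2" "x*y"] by simp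
  then have "\<bar>g\<bar>^2 \<le> (x^2 + y^2)^2" by (intro power_mono) auto
  then have "g^2 \<le> (x^2 + y^2)^2" by simp
  also have "\<dots> \<le> 2 * (x^4 + y^4)"
  proof -
    have "0 \<le> (x^2 - y^2)^2" by simp
    then show ?thesis by (simp add: power2_eq_square power4_eq_xxxx algebra_simps)
  qed
  finally show ?thesis unfolding g_def e(1,2,3,4) mult.assoc[symmetric] using e(5)
    by (simp add: mult.assoc)
qed

lemma gt_restrict: "{i..i+3} \<subseteq> A \<Longrightarrow> gt n f V (restrict \<xi> A) i = gt n f V \<xi> i"
  unfolding gt_def by (subst Rt_restrict, auto)+

lemma gt_meas: "{i..i+3} \<subseteq> A \<Longrightarrow> (\<lambda>\<omega>. gt n f V \<omega> i) \<in> borel_measurable (PiM A (\<lambda>_. NN))"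
proof -
  assume a: "{i..i+3} \<subseteq> A"
  have [measurable]: "(\<lambda>\<omega>. Rt n f V \<omega> i) \<in> borel_measurable (PiM A (\<lambda>_. NN))"
    "(\<lambda>\<omega>. Rt n f V \<omega> (i+1)) \<in> borel_measurable (PiM A (\<lambda>_. NN))"
    using a by (auto intro!: Rt_meas)
  show ?thesis unfolding gt_def by measurable
qed

locale setting =
  fixes n :: nat and f :: "real \<Rightarrow> real" and V :: "nat \<Rightarrow> real" and Bd :: real
  assumes hn: "n \<ge> 1" and hV: "\<forall>k\<in>{1..n}. 0 \<le> V k" and hB: "0 \<le> Bd"
    and hd: "\<And>i. 1 \<le> i \<Longrightarrow> i + 2 \<le> n \<Longrightarrow> \<bar>deltat n f i\<bar> \<le> Bd"
    and hs: "\<And>k. k \<in> {1..n} \<Longrightarrow> sqrt (V k) \<le> Bd"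
begin

abbreviation P where "P \<equiv> noise_measure n"

definition mu where "mu i = integral\<^sup>L P (\<lambda>\<xi>. gt n f V \<xi> i)"

definition hc where "hc \<xi> i = gt n f V \<xi> i - mu i"

lemma hs': "k \<in> {1..n} \<Longrightarrow> \<bar>sqrt (V k)\<bar> \<le> Bd"
  using hV hs by auto

lemma ER8: "1 \<le> i \<Longrightarrow> i + 2 \<le> n \<Longrightarrow> integral\<^sup>L P (\<lambda>\<xi>. Rt n f V \<xi> i ^ 8) \<le> KK 8 Bd"
  unfolding Rt_form
  by (rule E_lin_bound[OF hn]) (use hd hs' in auto)

lemma Egt2: assumes "1 \<le> i" "i + 3 \<le> n"
  shows "integral\<^sup>L P (\<lambda>\<xi>. gt n f V \<xi> i ^ 2) \<le> 4 * KK 8 Bd"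
proof -
  have g8: "good n (\<lambda>\<xi>. Rt n f V \<xi> (i+1) ^ 8)" "good n (\<lambda>\<xi>. Rt n f V \<xi> i ^ 8)"
    using assms by (auto intro!: good_intros good_Rt)
  have "integral\<^sup>L P (\<lambda>\<xi>. gt n f V \<xi> i ^ 2) \<le> integral\<^sup>L P (\<lambda>\<xi>. 2 * (Rt n f V \<xi> (i+1) ^ 8 + Rt n f V \<xi> i ^ 8))"
  proof (rule integral_mono)
    show "integrable P (\<lambda>\<xi>. gt n f V \<xi> i ^ 2)" using assms by (intro good_int good_pow good_gt)
    show "integrable P (\<lambda>\<xi>. 2 * (Rt n f V \<xi> (i+1) ^ 8 + Rt n f V \<xi> i ^ 8))"
      using g8 by (intro good_int good_mult good_const good_add)
    show "gt n f V \<xi> i ^ 2 \<le> 2 * (Rt n f V \<xi> (i+1) ^ 8 + Rt n f V \<xi> i ^ 8)" for \<xi>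
      unfolding gt_def by (rule g_sq_bound)
  qed
  also have "\<dots> = 2 * (integral\<^sup>L P (\<lambda>\<xi>. Rt n f V \<xi> (i+1) ^ 8) + integral\<^sup>L P (\<lambda>\<xi>. Rt n f V \<xi> i ^ 8))"
    using good_int[OF g8(1)] good_int[OF g8(2)] by simp
  also have "\<dots> \<le> 2 * (KK 8 Bd + KK 8 Bd)"
    using ER8[of "i+1"] ER8[of i] assms by (intro mult_left_mono add_mono) auto
  finally show ?thesis by simp
qed

lemma measP: "measure P (space P) = 1"
  using prob_space.emeasure_space_1[OF prob_P] by (simp add: measure_def)

lemma int_const: "integral\<^sup>L P (\<lambda>_. c) = (c::real)"
  using lebesgue_integral_const[of P c] measP by simp

lemma int_const_int: "integrable P (\<lambda>_. c::real)"
proof -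
  interpret prob_space P by (rule prob_P)
  show ?thesis by simp
qed

lemma good_hc: "1 \<le> i \<Longrightarrow> i + 3 \<le> n \<Longrightarrow> good n (\<lambda>\<xi>. hc \<xi> i)"
  unfolding hc_def by (intro good_diff good_gt good_const)

lemma Ehc2: assumes "1 \<le> i" "i + 3 \<le> n"
  shows "integral\<^sup>L P (\<lambda>\<xi>. hc \<xi> i ^ 2) \<le> 4 * KK 8 Bd"
proof -
  have g: "good n (\<lambda>\<xi>. gt n f V \<xi> i)" using assms by (rule good_gt)
  have g2: "good n (\<lambda>\<xi>. gt n f V \<xi> i ^ 2)" using g by (rule good_pow)
  have eq: "(\<lambda>\<xi>. hc \<xi> i ^ 2) = (\<lambda>\<xi>. gt n f V \<xi> i ^ 2 - (2 * mu i * gt n f V \<xi> i - mu i ^ 2))"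
    by (simp add: hc_def fun_eq_iff power2_eq_square algebra_simps)
  have "integral\<^sup>L P (\<lambda>\<xi>. hc \<xi> i ^ 2) = integral\<^sup>L P (\<lambda>\<xi>. gt n f V \<xi> i ^ 2) - (2 * mu i * mu i - mu i ^ 2)"
  proof -
    have i1: "integrable P (\<lambda>\<xi>. 2 * mu i * gt n f V \<xi> i)" using good_int[OF g] by simp
    have "integral\<^sup>L P (\<lambda>\<xi>. 2 * mu i * gt n f V \<xi> i - mu i ^ 2) = 2 * mu i * mu i - mu i ^ 2"
      using Bochner_Integration.integral_diff[OF i1 int_const_int[of "mu i ^ 2"]]
      by (simp add: int_const mu_def measP)
    moreover have "integral\<^sup>L P (\<lambda>\<xi>. gt n f V \<xi> i ^ 2 - (2 * mu i * gt n f V \<xi> i - mu i ^ 2)) =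
       integral\<^sup>L P (\<lambda>\<xi>. gt n f V \<xi> i ^ 2) - integral\<^sup>L P (\<lambda>\<xi>. 2 * mu i * gt n f V \<xi> i - mu i ^ 2)"
      by (rule Bochner_Integration.integral_diff[OF good_int[OF g2]]) (use i1 int_const_int in simp)
    ultimately show ?thesis unfolding eq by simp
  qed
  also have "\<dots> \<le> integral\<^sup>L P (\<lambda>\<xi>. gt n f V \<xi> i ^ 2)" by (simp add: power2_eq_square)
  finally show ?thesis using Egt2[OF assms] by linarith
qed

lemma Ehc: "1 \<le> i \<Longrightarrow> i + 3 \<le> n \<Longrightarrow> integral\<^sup>L P (\<lambda>\<xi>. hc \<xi> i) = 0"
  unfolding hc_def using Bochner_Integration.integral_diff[OF good_int[OF good_gt[of i n f V]] int_const_int[of "mu i"]]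
  by (simp add: int_const mu_def measP)

lemma Ecross0: assumes "1 \<le> i" "i + 4 \<le> j" "j + 3 \<le> n"
  shows "integral\<^sup>L P (\<lambda>\<xi>. hc \<xi> i * hc \<xi> j) = 0"
proof -
  have "integral\<^sup>L P (\<lambda>\<xi>. hc \<xi> i * hc \<xi> j) = integral\<^sup>L P (\<lambda>\<xi>. hc \<xi> i) * integral\<^sup>L P (\<lambda>\<xi>. hc \<xi> j)"
  proof (rule indep_blocks[OF hn, where A="{i..i+3}" and B="{j..j+3}"
      and F="\<lambda>\<omega>. gt n f V \<omega> i - mu i" and G="\<lambda>\<omega>. gt n f V \<omega> j - mu j"])
    have [measurable]: "(\<lambda>\<omega>. gt n f V \<omega> i) \<in> borel_measurable (PiM {i..i+3} (\<lambda>_. NN))"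
      "(\<lambda>\<omega>. gt n f V \<omega> j) \<in> borel_measurable (PiM {j..j+3} (\<lambda>_. NN))"
      by (auto intro!: gt_meas)
    show "(\<lambda>\<omega>. gt n f V \<omega> i - mu i) \<in> borel_measurable (PiM {i..i+3} (\<lambda>_. NN))" by measurable
    show "(\<lambda>\<omega>. gt n f V \<omega> j - mu j) \<in> borel_measurable (PiM {j..j+3} (\<lambda>_. NN))" by measurable
    show "gt n f V (restrict \<xi> {i..i+3}) i - mu i = hc \<xi> i" for \<xi>
      unfolding hc_def by (subst gt_restrict) auto
    show "gt n f V (restrict \<xi> {j..j+3}) j - mu j = hc \<xi> j" for \<xi>
      unfolding hc_def by (subst gt_restrict) auto
  qed (use assms in \<open>auto intro!: good_hc\<close>)
  then show ?thesis using Ehc[of i] Ehc[of j] assms by simp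
qed

lemma Ecross_le: assumes "1 \<le> i" "i + 3 \<le> n" "1 \<le> j" "j + 3 \<le> n"
  shows "integral\<^sup>L P (\<lambda>\<xi>. hc \<xi> i * hc \<xi> j) \<le> 4 * KK 8 Bd"
proof -
  have gi: "good n (\<lambda>\<xi>. hc \<xi> i)" "good n (\<lambda>\<xi>. hc \<xi> j)" using assms by (auto intro: good_hc)
  have "integral\<^sup>L P (\<lambda>\<xi>. hc \<xi> i * hc \<xi> j) \<le> integral\<^sup>L P (\<lambda>\<xi>. (hc \<xi> i ^ 2 + hc \<xi> j ^ 2) / 2)"
  proof (rule integral_mono)
    show "integrable P (\<lambda>\<xi>. hc \<xi> i * hc \<xi> j)" using gi by (intro good_int good_mult)
    show "integrable P (\<lambda>\<xi>. (hc \<xi> i ^ 2 + hc \<xi> j ^ 2) / 2)"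
      using gi by (intro good_int good_intros good_mult[OF _ good_const[of n "1/2"], simplified]) auto
    show "hc \<xi> i * hc \<xi> j \<le> (hc \<xi> i ^ 2 + hc \<xi> j ^ 2) / 2" for \<xi>
    proof -
      have "0 \<le> (hc \<xi> i - hc \<xi> j)^2" by simp
      then show ?thesis by (simp add: power2_eq_square algebra_simps)
    qed
  qed
  also have "\<dots> = (integral\<^sup>L P (\<lambda>\<xi>. hc \<xi> i ^ 2) + integral\<^sup>L P (\<lambda>\<xi>. hc \<xi> j ^ 2)) / 2"
    using good_int[OF good_pow[OF gi(1), of 2]] good_int[OF good_pow[OF gi(2), of 2]] by simp
  also have "\<dots> \<le> (4 * KK 8 Bd + 4 * KK 8 Bd) / 2"
    using Ehc2[of i] Ehc2[of j] assms by (intro divide_right_mono add_mono) auto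
  finally show ?thesis by simp
qed

end


lemma KK_nonneg: "0 \<le> B \<Longrightarrow> 0 \<le> KK N B"
  unfolding KK_def by (intro sum_nonneg mult_nonneg_nonneg) auto

lemma card_near: "card {j \<in> I. i \<le> j + 3 \<and> j \<le> i + 3} \<le> (7::nat)" for I :: "nat set"
proof -
  have "{j \<in> I. i \<le> j + 3 \<and> j \<le> i + 3} \<subseteq> {i - 3 .. i + 3}" by auto
  then have "card {j \<in> I. i \<le> j + 3 \<and> j \<le> i + 3} \<le> card {i - 3 .. i + 3}" by (intro card_mono) auto
  also have "\<dots> \<le> 7" by simp
  finally show ?thesis .
qed

context setting
begin

lemma Esum2: "integral\<^sup>L P (\<lambda>\<xi>. (\<Sum>i = 1..n - 3. hc \<xi> i) ^ 2) \<le> 28 * KK 8 Bd * real (n - 3)"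
proof -
  define I where "I = {1..n-3}"
  have inI: "i \<in> I \<Longrightarrow> 1 \<le> i \<and> i + 3 \<le> n" for i by (auto simp: I_def)
  have K0: "0 \<le> KK 8 Bd" by (rule KK_nonneg[OF hB])
  have gp: "good n (\<lambda>\<xi>. hc \<xi> i * hc \<xi> j)" if "i \<in> I" "j \<in> I" for i j
    using inI[OF that(1)] inI[OF that(2)] by (intro good_mult good_hc) auto
  have eq: "(\<Sum>i\<in>I. hc \<xi> i) ^ 2 = (\<Sum>i\<in>I. \<Sum>j\<in>I. hc \<xi> i * hc \<xi> j)" for \<xi>
    by (simp add: power2_eq_square sum_product)
  have "integral\<^sup>L P (\<lambda>\<xi>. (\<Sum>i\<in>I. hc \<xi> i) ^ 2) = integral\<^sup>L P (\<lambda>\<xi>. \<Sum>i\<in>I. \<Sum>j\<in>I. hc \<xi> i * hc \<xi> j)"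
    by (simp only: eq)
  also have "\<dots> = (\<Sum>i\<in>I. integral\<^sup>L P (\<lambda>\<xi>. \<Sum>j\<in>I. hc \<xi> i * hc \<xi> j))"
    by (rule Bochner_Integration.integral_sum) (intro good_int good_sum gp)
  also have "\<dots> = (\<Sum>i\<in>I. \<Sum>j\<in>I. integral\<^sup>L P (\<lambda>\<xi>. hc \<xi> i * hc \<xi> j))"
    by (intro sum.cong refl Bochner_Integration.integral_sum good_int gp)
  also have "\<dots> \<le> (\<Sum>i\<in>I. \<Sum>j\<in>I. if i \<le> j + 3 \<and> j \<le> i + 3 then 4 * KK 8 Bd else 0)"
  proof (intro sum_mono)
    fix i j assume i: "i \<in> I" and j: "j \<in> I"
    show "integral\<^sup>L P (\<lambda>\<xi>. hc \<xi> i * hc \<xi> j) \<le> (if i \<le> j + 3 \<and> j \<le> i + 3 then 4 * KK 8 Bd else 0)"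
    proof (cases "i \<le> j + 3 \<and> j \<le> i + 3")
      case True then show ?thesis using Ecross_le[of i j] inI[OF i] inI[OF j] by auto
    next
      case False
      then consider "i + 4 \<le> j" | "j + 4 \<le> i" by linarith
      then show ?thesis
      proof cases
        case 1 then show ?thesis using Ecross0[of i j] inI[OF i] inI[OF j] False K0 by auto
      next
        case 2
        have "integral\<^sup>L P (\<lambda>\<xi>. hc \<xi> i * hc \<xi> j) = integral\<^sup>L P (\<lambda>\<xi>. hc \<xi> j * hc \<xi> i)"
          by (simp add: mult.commute)
        also have "\<dots> = 0" using Ecross0[of j i] inI[OF i] inI[OF j] 2 by auto
        finally show ?thesis using False K0 by auto
      qed
    qed
  qed
  also have "\<dots> = (\<Sum>i\<in>I. 4 * KK 8 Bd * real (card {j \<in> I. i \<le> j + 3 \<and> j \<le> i + 3}))"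
    by (intro sum.cong refl) (simp add: sum.inter_filter[symmetric] I_def)
  also have "\<dots> \<le> (\<Sum>i\<in>I. 4 * KK 8 Bd * 7)"
    using K0 card_near by (intro sum_mono mult_left_mono) auto
  also have "\<dots> = 28 * KK 8 Bd * real (n - 3)" by (simp add: I_def)
  finally show ?thesis by (simp add: I_def)
qed

end


lemma sq_sum_le: "(x + y)^2 \<le> 2 * x^2 + 2 * (y::real)^2"
proof -
  have "0 \<le> (x - y)^2" by simp
  then show ?thesis by (simp add: power2_eq_square algebra_simps)
qed

lemma pow4_le: "\<bar>d\<bar> \<le> D \<Longrightarrow> d ^ 4 \<le> (D::real) ^ 4"
proof -
  assume a: "\<bar>d\<bar> \<le> D"
  have "\<bar>d\<bar> ^ 4 \<le> D ^ 4" by (rule power_mono[OF a]) simp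
  moreover have "\<bar>d\<bar> ^ 4 = d ^ 4" by (simp add: power_abs[symmetric] )
  ultimately show ?thesis by simp
qed

context setting
begin

lemma main_bound:
  assumes D0: "0 \<le> D" and hD: "\<And>i. 1 \<le> i \<Longrightarrow> i + 2 \<le> n \<Longrightarrow> \<bar>deltat n f i\<bar> \<le> D"
  shows "integral\<^sup>L P (\<lambda>\<xi>. (T2_hat n f V \<xi> - T2_tilde n f V) ^ 2)
     \<le> 56 * KK 8 Bd / real n + 2 * ((4/3) * D ^ 4) ^ 2"
proof -
  define I where "I = {1..n-3}"
  have inI: "i \<in> I \<Longrightarrow> 1 \<le> i \<and> i + 3 \<le> n" for i by (auto simp: I_def)
  define S where "S \<xi> = (\<Sum>i\<in>I. hc \<xi> i)" for \<xi>
  define b where "b = (\<Sum>i\<in>I. mu i - ht n f V i)"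
  have n0: "0 < real n" using hn by simp
  have K0: "0 \<le> KK 8 Bd" by (rule KK_nonneg[OF hB])
  have Td: "T2_hat n f V \<xi> - T2_tilde n f V = (1 / real n) * S \<xi> + (1 / real n) * b" for \<xi>
  proof -
    have "(\<Sum>i\<in>I. gt n f V \<xi> i) - (\<Sum>i\<in>I. ht n f V i) = S \<xi> + b"
      unfolding S_def b_def hc_def by (simp add: sum_subtractf[symmetric] sum.distrib[symmetric])
    then show ?thesis unfolding T2_hat_gt T2_tilde_ht I_def[symmetric] by (simp add: algebra_simps)
  qed
  have gS: "good n S" unfolding S_def using inI by (intro good_sum good_hc) auto
  have gT: "good n (\<lambda>\<xi>. T2_hat n f V \<xi>)" unfolding T2_hat_gt
    by (intro good_mult good_const good_sum good_gt) auto
  have "integral\<^sup>L P (\<lambda>\<xi>. (T2_hat n f V \<xi> - T2_tilde n f V) ^ 2)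
      \<le> integral\<^sup>L P (\<lambda>\<xi>. 2 * (1 / real n) ^ 2 * S \<xi> ^ 2 + 2 * ((1 / real n) * b) ^ 2)"
  proof (rule integral_mono)
    show "integrable P (\<lambda>\<xi>. (T2_hat n f V \<xi> - T2_tilde n f V) ^ 2)"
      using gT by (intro good_int good_pow good_diff good_const)
    show "integrable P (\<lambda>\<xi>. 2 * (1 / real n) ^ 2 * S \<xi> ^ 2 + 2 * ((1 / real n) * b) ^ 2)"
      using gS by (intro good_int good_add good_mult good_const good_pow)
    show "(T2_hat n f V \<xi> - T2_tilde n f V) ^ 2 \<le> 2 * (1 / real n) ^ 2 * S \<xi> ^ 2 + 2 * ((1 / real n) * b) ^ 2" for \<xi>
    proof -
      have e: "2 * (1 / real n) ^ 2 * S \<xi> ^ 2 = 2 * ((1 / real n) * S \<xi>) ^ 2" by (simp only: power_mult_distrib mult.assoc)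
      show ?thesis unfolding Td e by (rule sq_sum_le)
    qed
  qed
  also have "\<dots> = 2 * (1 / real n) ^ 2 * integral\<^sup>L P (\<lambda>\<xi>. S \<xi> ^ 2) + 2 * ((1 / real n) * b) ^ 2"
    using good_int[OF good_pow[OF gS, of 2]] int_const_int by (simp add: int_const measP)
  also have "\<dots> \<le> 2 * (1 / real n) ^ 2 * (28 * KK 8 Bd * real n) + 2 * ((4/3) * D ^ 4) ^ 2"
  proof (intro add_mono mult_left_mono)
    have "integral\<^sup>L P (\<lambda>\<xi>. S \<xi> ^ 2) \<le> 28 * KK 8 Bd * real (n - 3)"
      using Esum2 unfolding S_def I_def .
    also have "\<dots> \<le> 28 * KK 8 Bd * real n" using K0 by (intro mult_left_mono) auto
    finally show "integral\<^sup>L P (\<lambda>\<xi>. S \<xi> ^ 2) \<le> 28 * KK 8 Bd * real n" .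
    have bb: "\<bar>b\<bar> \<le> real n * ((4/3) * D ^ 4)"
    proof -
      have "\<bar>b\<bar> \<le> (\<Sum>i\<in>I. \<bar>mu i - ht n f V i\<bar>)" unfolding b_def by (rule sum_abs)
      also have "\<dots> \<le> real (card I) * ((4/3) * D ^ 4)"
      proof (rule sum_bounded_above)
        fix i assume "i \<in> I"
        then have i: "1 \<le> i" "i + 3 \<le> n" using inI by auto
        have "mu i - ht n f V i = - ((2/3) * ((deltat n f (i+1))^4 + (deltat n f i)^4))"
          unfolding mu_def using Egt[OF hn i hV] by simp
        moreover have "(deltat n f (i+1))^4 \<le> D^4" "(deltat n f i)^4 \<le> D^4"
          using hD[of "i+1"] hD[of i] i by (auto intro!: pow4_le)
        moreover have "0 \<le> (deltat n f (i+1))^4" "0 \<le> (deltat n f i)^4" by (simp_all add: zero_le_even_power)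
        ultimately show "\<bar>mu i - ht n f V i\<bar> \<le> (4/3) * D ^ 4" by simp
      qed
      also have "\<dots> \<le> real n * ((4/3) * D ^ 4)"
        using D0 by (intro mult_right_mono) (auto simp: I_def)
      finally show ?thesis .
    qed
    have "\<bar>(1 / real n) * b\<bar> \<le> (4/3) * D ^ 4"
      using bb n0 by (simp add: abs_mult divide_le_eq mult.commute)
    then have "\<bar>(1 / real n) * b\<bar> ^ 2 \<le> ((4/3) * D ^ 4) ^ 2" by (intro power_mono) auto
    then show "((1 / real n) * b) ^ 2 \<le> ((4/3) * D ^ 4) ^ 2" by (simp only: power2_abs)
  qed auto
  also have "\<dots> = 56 * KK 8 Bd / real n + 2 * ((4/3) * D ^ 4) ^ 2"
    using n0 by (simp add: power2_eq_square field_simps)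
  finally show ?thesis .
qed

end


lemma holder_props:
  assumes "\<alpha> > 0" "f \<in> holder_class \<alpha> M"
  shows "0 \<le> M" "\<And>x. x \<in> {0..1} \<Longrightarrow> \<bar>f x\<bar> \<le> M"
    "\<And>x y. x \<in> {0..1} \<Longrightarrow> y \<in> {0..1} \<Longrightarrow> \<bar>f x - f y\<bar> \<le> M * \<bar>x - y\<bar> powr min \<alpha> 1"
proof -
  obtain D :: "nat \<Rightarrow> real \<Rightarrow> real" where
    D0: "\<forall>x\<in>{0..1}. D 0 x = f x" and
    Dd: "\<forall>j < nat \<lfloor>\<alpha>\<rfloor>. \<forall>x\<in>{0..1}. (D j has_real_derivative D (Suc j) x) (at x within {0..1})" and
    Db: "\<forall>j \<le> nat \<lfloor>\<alpha>\<rfloor>. \<forall>x\<in>{0..1}. \<bar>D j x\<bar> \<le> M" and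
    Dh: "\<forall>x\<in>{0..1}. \<forall>y\<in>{0..1}. \<bar>D (nat \<lfloor>\<alpha>\<rfloor>) x - D (nat \<lfloor>\<alpha>\<rfloor>) y\<bar> \<le> M * \<bar>x - y\<bar> powr (\<alpha> - of_int \<lfloor>\<alpha>\<rfloor>)"
    using assms(2) unfolding holder_class_def by blast
  show fb: "\<bar>f x\<bar> \<le> M" if "x \<in> {0..1}" for x
    using Db D0 that by force
  show "0 \<le> M" using fb[of 0] by simp
  show "\<bar>f x - f y\<bar> \<le> M * \<bar>x - y\<bar> powr min \<alpha> 1" if x: "x \<in> {0..1}" and y: "y \<in> {0..1}" for x y
  proof (cases "\<alpha> < 1")
    case True
    then have "\<lfloor>\<alpha>\<rfloor> = 0" using assms(1) by (simp add: floor_eq_iff)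
    then show ?thesis using Dh x y D0 True by force
  next
    case False
    then have fl: "1 \<le> nat \<lfloor>\<alpha>\<rfloor>" by (simp add: le_nat_iff)
    have der: "(D 0 has_field_derivative D 1 z) (at z within {0..1})" if "z \<in> {0..1}" for z
      using Dd fl that by force
    have bd: "norm (D 1 z) \<le> M" if "z \<in> {0..1}" for z
      using Db fl that by force
    have "norm (D 0 x - D 0 y) \<le> M * norm (x - y)"
      by (rule field_differentiable_bound[OF convex_real_interval(5) der bd x y])
    then have "\<bar>f x - f y\<bar> \<le> M * \<bar>x - y\<bar>" using D0 x y by simp
    moreover have "min \<alpha> 1 = 1" using False by simp
    ultimately show ?thesis by simp
  qed
qed

lemma npow_bound:
  assumes "\<alpha> > 0" "n \<ge> (1::nat)"
  shows "real n powr (- 8 * min \<alpha> 1) \<le> 1 / real n + real n powr (- 8 * \<alpha>)"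
proof (cases "\<alpha> \<le> 1")
  case True then show ?thesis by simp
next
  case False
  have n1: "1 \<le> real n" using assms by simp
  have "real n powr (- 8 * min \<alpha> 1) = real n powr (-8)" using False by simp
  also have "\<dots> \<le> real n powr (-1)" using n1 by (intro powr_mono) auto
  also have "\<dots> = 1 / real n" using n1 by (simp add: powr_minus_divide)
  finally have "real n powr (- 8 * min \<alpha> 1) \<le> 1 / real n" .
  moreover have "0 \<le> real n powr (- 8 * \<alpha>)" by simp
  ultimately show ?thesis by linarith
qed


theorem proposition4p5:
  fixes \<alpha> M :: real
  assumes "\<alpha> > 0"
  shows "\<exists>C > 0. \<forall>n :: nat. \<forall>f V. n \<ge> 1 \<longrightarrow> f \<in> holder_class \<alpha> M \<longrightarrow>
           (\<forall>i\<in>{1..n}. 0 \<le> V i \<and> V i \<le> M) \<longrightarrow>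
           (\<integral>\<^sup>+ \<xi>. ennreal ((T2_hat n f V \<xi> - T2_tilde n f V) ^ 2) \<partial>noise_measure n)
             \<le> ennreal (C * (1 / real n + real n powr (- 8 * \<alpha>)))"
proof -
  define Bd where "Bd = 2 * \<bar>M\<bar> + sqrt \<bar>M\<bar>"
  define C where "C = 56 * KK 8 Bd + (32/9) * 256 * M ^ 8 + 1"
  have Bd0: "0 \<le> Bd" unfolding Bd_def by simp
  have K0: "0 \<le> KK 8 Bd" by (rule KK_nonneg[OF Bd0])
  have M8: "0 \<le> M ^ 8" by (simp add: zero_le_even_power)
  have C0: "C > 0" unfolding C_def using K0 M8 by linarith
  show ?thesis
  proof (intro exI[of _ C] conjI allI impI C0)
    fix n :: nat and f V
    assume n1: "n \<ge> 1" and hf: "f \<in> holder_class \<alpha> M" and hV: "\<forall>i\<in>{1..n}. 0 \<le> V i \<and> V i \<le> M"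
    note hp = holder_props[OF assms hf]
    have M0: "0 \<le> M" by (rule hp(1))
    define \<beta> where "\<beta> = min \<alpha> 1"
    have b0: "0 < \<beta>" "\<beta> \<le> 1" using assms by (auto simp: \<beta>_def)
    have n0: "0 < real n" using n1 by simp
    have pts: "real (i + 2) / real n \<in> {0..1}" "real i / real n \<in> {0..1}" if "i + 2 \<le> n" for i
      using that n0 by (auto simp: divide_le_eq)
    have dist: "\<bar>real (i + 2) / real n - real i / real n\<bar> = 2 / real n" for i
      using n0 by (simp add: diff_divide_distrib[symmetric])
    interpret S: setting n f V Bd
    proof
      show "n \<ge> 1" by (rule n1)
      show "\<forall>k\<in>{1..n}. 0 \<le> V k" using hV by auto
      show "0 \<le> Bd" by (rule Bd0)
      show "\<bar>deltat n f i\<bar> \<le> Bd" if "1 \<le> i" "i + 2 \<le> n" for i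
      proof -
        have "\<bar>deltat n f i\<bar> \<le> \<bar>f (real (i + 2) / real n)\<bar> + \<bar>f (real i / real n)\<bar>"
          unfolding deltat_def by linarith
        also have "\<dots> \<le> M + M" using hp(2) pts[OF that(2)] by (intro add_mono) auto
        finally have "\<bar>deltat n f i\<bar> \<le> M + M" .
        moreover have "0 \<le> sqrt \<bar>M\<bar>" by simp
        ultimately show ?thesis unfolding Bd_def abs_of_nonneg[OF M0] by linarith
      qed
      show "sqrt (V k) \<le> Bd" if "k \<in> {1..n}" for k
      proof -
        have "sqrt (V k) \<le> sqrt \<bar>M\<bar>" using hV that M0 by (auto intro: real_sqrt_le_mono)
        then show ?thesis unfolding Bd_def using abs_ge_zero[of M] by linarith
      qed
    qed
    define D where "D = 2 * M * real n powr (- \<beta>)"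
    have D0: "0 \<le> D" unfolding D_def using M0 by simp
    have hD: "\<bar>deltat n f i\<bar> \<le> D" if "1 \<le> i" "i + 2 \<le> n" for i
    proof -
      have "\<bar>deltat n f i\<bar> \<le> M * (2 / real n) powr \<beta>"
        unfolding deltat_def \<beta>_def using hp(3)[OF pts[OF that(2)]] dist[of i] by simp
      also have "(2 / real n) powr \<beta> = 2 powr \<beta> * real n powr (- \<beta>)"
        using n0 by (simp add: powr_divide powr_minus_divide)
      also have "2 powr \<beta> \<le> 2" using b0 powr_mono[of \<beta> 1 2] by simp
      then have "M * (2 powr \<beta> * real n powr (- \<beta>)) \<le> M * (2 * real n powr (- \<beta>))"
        using M0 by (intro mult_left_mono mult_right_mono) auto
      finally show ?thesis unfolding D_def by simp
    qed
    have E: "integral\<^sup>L (noise_measure n) (\<lambda>\<xi>. (T2_hat n f V \<xi> - T2_tilde n f V) ^ 2)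
       \<le> 56 * KK 8 Bd / real n + 2 * ((4/3) * D ^ 4) ^ 2"
      by (rule S.main_bound[OF D0 hD])
    have "2 * ((4/3) * D ^ 4) ^ 2 = (32/9) * 256 * M ^ 8 * (real n powr (- \<beta>)) ^ 8"
      unfolding D_def by (simp add: power_mult_distrib power2_eq_square power4_eq_xxxx eval_nat_numeral)
    also have "(real n powr (- \<beta>)) ^ 8 = real n powr (- 8 * min \<alpha> 1)"
      using n0 by (simp add: powr_realpow[symmetric] powr_powr \<beta>_def mult.commute)
    finally have e2: "2 * ((4/3) * D ^ 4) ^ 2 = (32/9) * 256 * M ^ 8 * real n powr (- 8 * min \<alpha> 1)" .
    have pb: "real n powr (- 8 * min \<alpha> 1) \<le> 1 / real n + real n powr (- 8 * \<alpha>)"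
      by (rule npow_bound[OF assms n1])
    have q0: "0 \<le> 1 / real n + real n powr (- 8 * \<alpha>)" by simp
    have i1: "1 / real n \<le> 1 / real n + real n powr (- 8 * \<alpha>)" by simp
    have "integral\<^sup>L (noise_measure n) (\<lambda>\<xi>. (T2_hat n f V \<xi> - T2_tilde n f V) ^ 2)
       \<le> 56 * KK 8 Bd * (1 / real n + real n powr (- 8 * \<alpha>)) + (32/9) * 256 * M ^ 8 * (1 / real n + real n powr (- 8 * \<alpha>))"
    proof -
      have "56 * KK 8 Bd / real n \<le> 56 * KK 8 Bd * (1 / real n + real n powr (- 8 * \<alpha>))"
        using mult_left_mono[OF i1, of "56 * KK 8 Bd"] K0 by simp
      moreover have "(32/9) * 256 * M ^ 8 * real n powr (- 8 * min \<alpha> 1) \<le> (32/9) * 256 * M ^ 8 * (1 / real n + real n powr (- 8 * \<alpha>))"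
        using M8 pb by (intro mult_left_mono) auto
      ultimately show ?thesis using E e2 by linarith
    qed
    also have "\<dots> \<le> C * (1 / real n + real n powr (- 8 * \<alpha>))"
    proof -
      have "C * (1 / real n + real n powr (- 8 * \<alpha>)) = 56 * KK 8 Bd * (1 / real n + real n powr (- 8 * \<alpha>))
         + (32/9) * 256 * M ^ 8 * (1 / real n + real n powr (- 8 * \<alpha>)) + (1 / real n + real n powr (- 8 * \<alpha>))"
        unfolding C_def by (simp only: distrib_right mult_1_left)
      then show ?thesis using q0 by linarith
    qed
    finally have fin: "integral\<^sup>L (noise_measure n) (\<lambda>\<xi>. (T2_hat n f V \<xi> - T2_tilde n f V) ^ 2)
      \<le> C * (1 / real n + real n powr (- 8 * \<alpha>))" .
    have gT: "good n (\<lambda>\<xi>. (T2_hat n f V \<xi> - T2_tilde n f V) ^ 2)" unfolding T2_hat_gt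
      by (intro good_pow good_diff good_mult good_const good_sum good_gt) auto
    have "(\<integral>\<^sup>+ \<xi>. ennreal ((T2_hat n f V \<xi> - T2_tilde n f V) ^ 2) \<partial>noise_measure n)
       = ennreal (integral\<^sup>L (noise_measure n) (\<lambda>\<xi>. (T2_hat n f V \<xi> - T2_tilde n f V) ^ 2))"
      by (rule nn_integral_eq_integral[OF good_int[OF gT]]) simp
    also have "\<dots> \<le> ennreal (C * (1 / real n + real n powr (- 8 * \<alpha>)))"
      by (rule ennreal_leI[OF fin])
    finally show "(\<integral>\<^sup>+ \<xi>. ennreal ((T2_hat n f V \<xi> - T2_tilde n f V) ^ 2) \<partial>noise_measure n)
       \<le> ennreal (C * (1 / real n + real n powr (- 8 * \<alpha>)))" .
  qed
qed


end
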